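(* For each $n\ge0$, the presheaf $B_n$ is a projective object in the abelian category $\mathcal{Mod}(\mathcal A)$.
   Context: $\mathcal S$ is the category of variables of an information structure: a small poset category with terminal object $\mathbf 1$, finite-dimensional nerve, and such that whenever $Z\to X$ and $Z\to Y$ the categorical product $XY:=X\wedge Y$ exists. It carries the trivial topology (every presheaf is a sheaf). For $X\in\mathrm{Ob}\,\mathcal S$, $\mathcal S_X=\{Y: X\to Y\}$ is a commutative monoid under the product, and $\mathcal A_X=\mathbb R[\mathcal S_X]$ its monoid algebra; $X\mapsto\mathcal A_X$ is a presheaf of rings $\mathcal A$ (an arrow $X\to Y$ induces the inclusion $\mathcal A_Y\subseteq\mathcal A_X$). $\mathcal{Mod}(\mathcal A)$ is the category of presheaves of $\mathcal A$-modules (presheaves $F$ of abelian groups with each $F(X)$ an $\mathcal A_X$-module compatibly with restrictions) and $\mathcal A$-linear natural transformations. $B_n(X)$ is the free $\mathcal A_X$-module on the symbols $[X_1|\dots|X_n]$ with $X_1,\dots,X_n\in\mathcal S_X$, with restriction maps induced by the inclusions $\mathcal S_Y\subseteq\mathcal S_X$. *)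

theory Defs
  imports Complex_Main "HOL-Algebra.Module"
begin

text \<open>An information structure: a set S of variables with a partial order arr,
  where arr X Y means there is an arrow X \<rightarrow> Y (Y is coarser than X).\<close>

definition info_structure :: "'a set \<Rightarrow> ('a \<Rightarrow> 'a \<Rightarrow> bool) \<Rightarrow> 'a \<Rightarrow> bool" where
  "info_structure S arr top1 \<longleftrightarrow>
     (\<forall>X\<in>S. arr X X) \<and>
     (\<forall>X\<in>S. \<forall>Y\<in>S. \<forall>Z\<in>S. arr X Y \<longrightarrow> arr Y Z \<longrightarrow> arr X Z) \<and>
     (\<forall>X\<in>S. \<forall>Y\<in>S. arr X Y \<longrightarrow> arr Y X \<longrightarrow> X = Y) \<and>
     top1 \<in> S \<and> (\<forall>X\<in>S. arr X top1) \<and>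
     (\<exists>d::nat. \<forall>xs. set xs \<subseteq> S \<and> sorted_wrt (\<lambda>x y. arr x y \<and> x \<noteq> y) xs
                     \<longrightarrow> length xs \<le> d) \<and>
     (\<forall>X\<in>S. \<forall>Y\<in>S. \<forall>Z\<in>S. arr Z X \<and> arr Z Y \<longrightarrow>
        (\<exists>P\<in>S. arr P X \<and> arr P Y \<and> (\<forall>W\<in>S. arr W X \<and> arr W Y \<longrightarrow> arr W P)))"

definition meet :: "'a set \<Rightarrow> ('a \<Rightarrow> 'a \<Rightarrow> bool) \<Rightarrow> 'a \<Rightarrow> 'a \<Rightarrow> 'a" where
  "meet S arr X Y = (THE P. P \<in> S \<and> arr P X \<and> arr P Y \<and> (\<forall>W\<in>S. arr W X \<and> arr W Y \<longrightarrow> arr W P))"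

definition SX :: "'a set \<Rightarrow> ('a \<Rightarrow> 'a \<Rightarrow> bool) \<Rightarrow> 'a \<Rightarrow> 'a set" where
  "SX S arr X = {Y \<in> S. arr X Y}"

text \<open>The monoid algebra A_X = R[S_X], elements are finitely supported real functions
  with support in S_X; multiplication is convolution with respect to the product.
  For X \<rightarrow> Y, A_Y is literally a subset of A_X.\<close>
definition alg :: "'a set \<Rightarrow> ('a \<Rightarrow> 'a \<Rightarrow> bool) \<Rightarrow> 'a \<Rightarrow> 'a \<Rightarrow> ('a \<Rightarrow> real) ring" where
  "alg S arr top1 X = \<lparr>carrier = {f. finite {Y. f Y \<noteq> 0} \<and> {Y. f Y \<noteq> 0} \<subseteq> SX S arr X},
     mult = (\<lambda>f g Z. \<Sum>(Y, W) \<in> {(Y, W). f Y \<noteq> 0 \<and> g W \<noteq> 0 \<and> meet S arr Y W = Z}. f Y * g W),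
     one = (\<lambda>Y. if Y = top1 then 1 else 0),
     zero = (\<lambda>Y. 0),
     add = (\<lambda>f g Y. f Y + g Y)\<rparr>"

definition presheaf_mod ::
  "'a set \<Rightarrow> ('a \<Rightarrow> 'a \<Rightarrow> bool) \<Rightarrow> 'a \<Rightarrow> ('a \<Rightarrow> ('a \<Rightarrow> real, 'm) module)
     \<Rightarrow> ('a \<Rightarrow> 'a \<Rightarrow> 'm \<Rightarrow> 'm) \<Rightarrow> bool" where
  "presheaf_mod S arr top1 F res \<longleftrightarrow>
     (\<forall>X\<in>S. module (alg S arr top1 X) (F X)) \<and>
     (\<forall>X\<in>S. \<forall>Y\<in>S. arr X Y \<longrightarrow>
        res X Y \<in> carrier (F Y) \<rightarrow> carrier (F X) \<and>
        (\<forall>x\<in>carrier (F Y). \<forall>y\<in>carrier (F Y).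
            res X Y (x \<oplus>\<^bsub>F Y\<^esub> y) = res X Y x \<oplus>\<^bsub>F X\<^esub> res X Y y) \<and>
        (\<forall>a\<in>carrier (alg S arr top1 Y). \<forall>x\<in>carrier (F Y).
            res X Y (a \<odot>\<^bsub>F Y\<^esub> x) = a \<odot>\<^bsub>F X\<^esub> res X Y x)) \<and>
     (\<forall>X\<in>S. \<forall>x\<in>carrier (F X). res X X x = x) \<and>
     (\<forall>X\<in>S. \<forall>Y\<in>S. \<forall>Z\<in>S. arr X Y \<longrightarrow> arr Y Z \<longrightarrow>
        (\<forall>x\<in>carrier (F Z). res X Y (res Y Z x) = res X Z x))"

definition presheaf_mod_hom ::
  "'a set \<Rightarrow> ('a \<Rightarrow> 'a \<Rightarrow> bool) \<Rightarrow> 'a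
     \<Rightarrow> ('a \<Rightarrow> ('a \<Rightarrow> real, 'm) module) \<Rightarrow> ('a \<Rightarrow> 'a \<Rightarrow> 'm \<Rightarrow> 'm)
     \<Rightarrow> ('a \<Rightarrow> ('a \<Rightarrow> real, 'n) module) \<Rightarrow> ('a \<Rightarrow> 'a \<Rightarrow> 'n \<Rightarrow> 'n)
     \<Rightarrow> ('a \<Rightarrow> 'm \<Rightarrow> 'n) \<Rightarrow> bool" where
  "presheaf_mod_hom S arr top1 F resF G resG \<phi> \<longleftrightarrow>
     (\<forall>X\<in>S. \<phi> X \<in> carrier (F X) \<rightarrow> carrier (G X) \<and>
        (\<forall>x\<in>carrier (F X). \<forall>y\<in>carrier (F X).
            \<phi> X (x \<oplus>\<^bsub>F X\<^esub> y) = \<phi> X x \<oplus>\<^bsub>G X\<^esub> \<phi> X y) \<and>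
        (\<forall>a\<in>carrier (alg S arr top1 X). \<forall>x\<in>carrier (F X).
            \<phi> X (a \<odot>\<^bsub>F X\<^esub> x) = a \<odot>\<^bsub>G X\<^esub> \<phi> X x)) \<and>
     (\<forall>X\<in>S. \<forall>Y\<in>S. arr X Y \<longrightarrow>
        (\<forall>x\<in>carrier (F Y). \<phi> X (resF X Y x) = resG X Y (\<phi> Y x)))"

definition presheaf_mod_epi where
  "presheaf_mod_epi S arr top1 F resF G resG \<phi> \<longleftrightarrow>
     presheaf_mod_hom S arr top1 F resF G resG \<phi> \<and>
     (\<forall>X\<in>S. \<phi> X ` carrier (F X) = carrier (G X))"

text \<open>Projective object, relative to the element types 'm, 'n of the other objects
  (which are arbitrary, since the theorem is universally quantified over types).\<close>
definition projective ::
  "'m itself \<Rightarrow> 'n itself \<Rightarrow> 'a set \<Rightarrow> ('a \<Rightarrow> 'a \<Rightarrow> bool) \<Rightarrow> 'a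
     \<Rightarrow> ('a \<Rightarrow> ('a \<Rightarrow> real, 'p) module) \<Rightarrow> ('a \<Rightarrow> 'a \<Rightarrow> 'p \<Rightarrow> 'p) \<Rightarrow> bool" where
  "projective _ _ S arr top1 P resP \<longleftrightarrow>
     presheaf_mod S arr top1 P resP \<and>
     (\<forall>(F :: 'a \<Rightarrow> ('a \<Rightarrow> real, 'm) module) resF (G :: 'a \<Rightarrow> ('a \<Rightarrow> real, 'n) module) resG e f.
        presheaf_mod S arr top1 F resF \<longrightarrow> presheaf_mod S arr top1 G resG \<longrightarrow>
        presheaf_mod_epi S arr top1 F resF G resG e \<longrightarrow>
        presheaf_mod_hom S arr top1 P resP G resG f \<longrightarrow>
        (\<exists>g. presheaf_mod_hom S arr top1 P resP F resF g \<and>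
             (\<forall>X\<in>S. \<forall>x\<in>carrier (P X). e X (g X x) = f X x)))"

text \<open>The presheaf B_n: B_n(X) is the free A_X-module on the symbols [X_1|...|X_n]
  (lists of length n over S_X), represented as finitely supported functions from symbols
  to A_X. The ring fields mult/top1 are irrelevant for modules and set to zero.\<close>
definition Bsym :: "'a set \<Rightarrow> ('a \<Rightarrow> 'a \<Rightarrow> bool) \<Rightarrow> nat \<Rightarrow> 'a \<Rightarrow> 'a list set" where
  "Bsym S arr n X = {xs. length xs = n \<and> set xs \<subseteq> SX S arr X}"

definition Bmod :: "'a set \<Rightarrow> ('a \<Rightarrow> 'a \<Rightarrow> bool) \<Rightarrow> 'a \<Rightarrow> nat \<Rightarrow> 'a
     \<Rightarrow> ('a \<Rightarrow> real, 'a list \<Rightarrow> 'a \<Rightarrow> real) module" where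
  "Bmod S arr top1 n X = \<lparr>carrier = {m. finite {s. m s \<noteq> (\<lambda>Y. 0)} \<and>
        (\<forall>s. m s \<in> carrier (alg S arr top1 X)) \<and>
        (\<forall>s. m s \<noteq> (\<lambda>Y. 0) \<longrightarrow> s \<in> Bsym S arr n X)},
     mult = (\<lambda>m m' s Y. 0),
     one = (\<lambda>s Y. 0),
     zero = (\<lambda>s Y. 0),
     add = (\<lambda>m m' s Y. m s Y + m' s Y),
     smult = (\<lambda>a m s. a \<otimes>\<^bsub>alg S arr top1 X\<^esub> m s)\<rparr>"

text \<open>Restriction maps of B_n are induced by the inclusions S_Y \<subseteq> S_X: the identity.\<close>
definition Bres :: "'a \<Rightarrow> 'a \<Rightarrow> ('a list \<Rightarrow> 'a \<Rightarrow> real) \<Rightarrow> ('a list \<Rightarrow> 'a \<Rightarrow> real)" where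
  "Bres X Y m = m"

end

theory Submission
  imports Defs
begin


context
  fixes S :: "'a set" and arr :: "'a \<Rightarrow> 'a \<Rightarrow> bool" and top1 :: 'a
  assumes IS: "info_structure S arr top1"
begin

lemma refl': "X \<in> S \<Longrightarrow> arr X X" using IS unfolding info_structure_def by blast
lemma trans': "X \<in> S \<Longrightarrow> Y \<in> S \<Longrightarrow> Z \<in> S \<Longrightarrow> arr X Y \<Longrightarrow> arr Y Z \<Longrightarrow> arr X Z"
  using IS unfolding info_structure_def by blast
lemma antisym': "X \<in> S \<Longrightarrow> Y \<in> S \<Longrightarrow> arr X Y \<Longrightarrow> arr Y X \<Longrightarrow> X = Y"
  using IS unfolding info_structure_def by blast
lemma glb_ex: "X \<in> S \<Longrightarrow> Y \<in> S \<Longrightarrow> Z \<in> S \<Longrightarrow> arr Z X \<Longrightarrow> arr Z Y \<Longrightarrow>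
        (\<exists>P\<in>S. arr P X \<and> arr P Y \<and> (\<forall>W\<in>S. arr W X \<and> arr W Y \<longrightarrow> arr W P))"
proof -
  have "\<forall>X\<in>S. \<forall>Y\<in>S. \<forall>Z\<in>S. arr Z X \<and> arr Z Y \<longrightarrow>
        (\<exists>P\<in>S. arr P X \<and> arr P Y \<and> (\<forall>W\<in>S. arr W X \<and> arr W Y \<longrightarrow> arr W P))"
    using IS unfolding info_structure_def by (elim conjE)
  then show "X \<in> S \<Longrightarrow> Y \<in> S \<Longrightarrow> Z \<in> S \<Longrightarrow> arr Z X \<Longrightarrow> arr Z Y \<Longrightarrow> ?thesis" by blast
qed
lemma top_in: "top1 \<in> S" using IS unfolding info_structure_def by blast
lemma arr_top: "X \<in> S \<Longrightarrow> arr X top1" using IS unfolding info_structure_def by blast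

lemma meet_eq:
  assumes "P \<in> S" "arr P Y" "arr P W" "\<forall>V\<in>S. arr V Y \<and> arr V W \<longrightarrow> arr V P"
  shows "meet S arr Y W = P"
  unfolding meet_def
proof (rule the_equality)
  show "P \<in> S \<and> arr P Y \<and> arr P W \<and> (\<forall>V\<in>S. arr V Y \<and> arr V W \<longrightarrow> arr V P)" using assms by blast
next
  fix Q assume "Q \<in> S \<and> arr Q Y \<and> arr Q W \<and> (\<forall>V\<in>S. arr V Y \<and> arr V W \<longrightarrow> arr V Q)"
  then have q: "Q \<in> S" "arr Q Y" "arr Q W" "\<forall>V\<in>S. arr V Y \<and> arr V W \<longrightarrow> arr V Q" by auto
  have "arr Q P" using assms(4) q(1-3) by blast
  moreover have "arr P Q" using q(4) assms(1-3) by blast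
  ultimately show "Q = P" by (rule antisym'[OF q(1) assms(1)])
qed

lemma meet_glb:
  assumes "X \<in> S" "Y \<in> SX S arr X" "W \<in> SX S arr X"
  shows "meet S arr Y W \<in> S \<and> arr (meet S arr Y W) Y \<and> arr (meet S arr Y W) W \<and>
         (\<forall>V\<in>S. arr V Y \<and> arr V W \<longrightarrow> arr V (meet S arr Y W))"
proof -
  have "Y \<in> S" "W \<in> S" "arr X Y" "arr X W" using assms unfolding SX_def by auto
  then obtain P where "P\<in>S" "arr P Y" "arr P W" "\<forall>V\<in>S. arr V Y \<and> arr V W \<longrightarrow> arr V P"
    using glb_ex[of Y W X] assms(1) by blast
  moreover have "meet S arr Y W = P" using meet_eq calculation by blast
  ultimately show ?thesis by simp
qed

lemma meet_SX:
  assumes "X \<in> S" "Y \<in> SX S arr X" "W \<in> SX S arr X"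
  shows "meet S arr Y W \<in> SX S arr X"
  using meet_glb[OF assms] assms unfolding SX_def by auto

lemma meet_comm: "meet S arr Y W = meet S arr W Y"
proof -
  have "\<And>P. (P \<in> S \<and> arr P Y \<and> arr P W \<and> (\<forall>V\<in>S. arr V Y \<and> arr V W \<longrightarrow> arr V P)) =
        (P \<in> S \<and> arr P W \<and> arr P Y \<and> (\<forall>V\<in>S. arr V W \<and> arr V Y \<longrightarrow> arr V P))" by blast
  then show ?thesis unfolding meet_def by presburger
qed

lemma meet_top: "Y \<in> S \<Longrightarrow> meet S arr Y top1 = Y"
proof (rule meet_eq)
  assume Y: "Y \<in> S"
  show "Y \<in> S" by (rule Y)
  show "arr Y Y" by (rule refl'[OF Y])
  show "arr Y top1" by (rule arr_top[OF Y])
  show "\<forall>V\<in>S. arr V Y \<and> arr V top1 \<longrightarrow> arr V Y" by blast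
qed

lemma meet_in: "X \<in> S \<Longrightarrow> Y \<in> SX S arr X \<Longrightarrow> W \<in> SX S arr X \<Longrightarrow> meet S arr Y W \<in> S"
  by (rule conjunct1[OF meet_glb])
lemma meet_le1: "X \<in> S \<Longrightarrow> Y \<in> SX S arr X \<Longrightarrow> W \<in> SX S arr X \<Longrightarrow> arr (meet S arr Y W) Y"
  by (rule conjunct1[OF conjunct2[OF meet_glb]])
lemma meet_le2: "X \<in> S \<Longrightarrow> Y \<in> SX S arr X \<Longrightarrow> W \<in> SX S arr X \<Longrightarrow> arr (meet S arr Y W) W"
  by (rule conjunct1[OF conjunct2[OF conjunct2[OF meet_glb]]])
lemma meet_gr: "X \<in> S \<Longrightarrow> Y \<in> SX S arr X \<Longrightarrow> W \<in> SX S arr X \<Longrightarrow> V \<in> S \<Longrightarrow> arr V Y \<Longrightarrow> arr V W \<Longrightarrow> arr V (meet S arr Y W)"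
  using conjunct2[OF conjunct2[OF conjunct2[OF meet_glb[of X Y W]]]] by blast

lemma meet_assoc:
  assumes X: "X \<in> S" and a: "Y \<in> SX S arr X" "W \<in> SX S arr X" "V \<in> SX S arr X"
  shows "meet S arr (meet S arr Y W) V = meet S arr Y (meet S arr W V)"
proof -
  have S: "Y \<in> S" "W \<in> S" "V \<in> S" using a unfolding SX_def by auto
  have s1: "meet S arr W V \<in> SX S arr X" by (rule meet_SX[OF X a(2,3)])
  let ?R = "meet S arr Y (meet S arr W V)"
  have RS: "?R \<in> S" by (rule meet_in[OF X a(1) s1])
  have MW: "meet S arr Y W \<in> S" "meet S arr W V \<in> S" by (rule meet_in[OF X a(1,2)], rule meet_in[OF X a(2,3)])
  have a1: "arr ?R Y" "arr ?R (meet S arr W V)" by (rule meet_le1[OF X a(1) s1], rule meet_le2[OF X a(1) s1])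
  have a2: "arr ?R W" by (rule trans'[OF RS MW(2) S(2) a1(2) meet_le1[OF X a(2,3)]])
  have a3: "arr ?R V" by (rule trans'[OF RS MW(2) S(3) a1(2) meet_le2[OF X a(2,3)]])
  show ?thesis
  proof (rule meet_eq)
    show "?R \<in> S" by (rule RS)
    show "arr ?R (meet S arr Y W)" by (rule meet_gr[OF X a(1,2) RS a1(1) a2])
    show "arr ?R V" by (rule a3)
    show "\<forall>U\<in>S. arr U (meet S arr Y W) \<and> arr U V \<longrightarrow> arr U ?R"
    proof (intro ballI impI)
      fix U assume U: "U \<in> S" "arr U (meet S arr Y W) \<and> arr U V"
      have u1: "arr U Y" by (rule trans'[OF U(1) MW(1) S(1)]) (use U meet_le1[OF X a(1,2)] in auto)
      have u2: "arr U W" by (rule trans'[OF U(1) MW(1) S(2)]) (use U meet_le2[OF X a(1,2)] in auto)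
      have "arr U (meet S arr W V)" by (rule meet_gr[OF X a(2,3) U(1) u2]) (use U in auto)
      then show "arr U ?R" by (rule meet_gr[OF X a(1) s1 U(1) u1])
    qed
  qed
qed

end


definition supp :: "('a \<Rightarrow> real) \<Rightarrow> 'a set" where "supp f = {Y. f Y \<noteq> 0}"

lemma alg_mult: "f \<otimes>\<^bsub>alg S arr top1 X\<^esub> g = (\<lambda>Z. \<Sum>(Y, W) \<in> {(Y, W). f Y \<noteq> 0 \<and> g W \<noteq> 0 \<and> meet S arr Y W = Z}. f Y * g W)"
  by (simp add: alg_def)

lemma conv_expand:
  assumes "finite A" "finite B" "supp f \<subseteq> A" "supp g \<subseteq> B"
  shows "(f \<otimes>\<^bsub>alg S arr top1 X\<^esub> g) Z = (\<Sum>Y\<in>A. \<Sum>W\<in>B. if meet S arr Y W = Z then f Y * g W else 0)"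
proof -
  have e: "{(Y, W). f Y \<noteq> 0 \<and> g W \<noteq> 0 \<and> meet S arr Y W = Z} =
      {p \<in> A \<times> B. f (fst p) \<noteq> 0 \<and> g (snd p) \<noteq> 0 \<and> meet S arr (fst p) (snd p) = Z}"
    using assms(3,4) unfolding supp_def by auto
  have "(f \<otimes>\<^bsub>alg S arr top1 X\<^esub> g) Z = (\<Sum>p\<in>{p \<in> A \<times> B. f (fst p) \<noteq> 0 \<and> g (snd p) \<noteq> 0 \<and> meet S arr (fst p) (snd p) = Z}. f (fst p) * g (snd p))"
    unfolding alg_mult e by (simp add: case_prod_beta)
  also have "\<dots> = (\<Sum>p\<in>A \<times> B. if f (fst p) \<noteq> 0 \<and> g (snd p) \<noteq> 0 \<and> meet S arr (fst p) (snd p) = Z then f (fst p) * g (snd p) else 0)"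
    using assms by (simp add: sum.inter_filter)
  also have "\<dots> = (\<Sum>p\<in>A \<times> B. if meet S arr (fst p) (snd p) = Z then f (fst p) * g (snd p) else 0)"
    by (rule sum.cong) auto
  also have "\<dots> = (\<Sum>Y\<in>A. \<Sum>W\<in>B. if meet S arr Y W = Z then f Y * g W else 0)"
    by (simp add: sum.cartesian_product case_prod_beta)
  finally show ?thesis .
qed

lemma sum_swap4:
  fixes t :: "_ \<Rightarrow> _ \<Rightarrow> _ \<Rightarrow> _ \<Rightarrow> real"
  shows "(\<Sum>a\<in>A. \<Sum>b\<in>B. \<Sum>c\<in>C. \<Sum>d\<in>D. t a b c d) = (\<Sum>c\<in>C. \<Sum>d\<in>D. \<Sum>b\<in>B. \<Sum>a\<in>A. t a b c d)"
proof -
  have "(\<Sum>a\<in>A. \<Sum>b\<in>B. \<Sum>c\<in>C. \<Sum>d\<in>D. t a b c d) = (\<Sum>b\<in>B. \<Sum>a\<in>A. \<Sum>c\<in>C. \<Sum>d\<in>D. t a b c d)"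
    by (rule sum.swap)
  also have "\<dots> = (\<Sum>b\<in>B. \<Sum>c\<in>C. \<Sum>a\<in>A. \<Sum>d\<in>D. t a b c d)"
    by (rule sum.cong[OF refl], rule sum.swap)
  also have "\<dots> = (\<Sum>b\<in>B. \<Sum>c\<in>C. \<Sum>d\<in>D. \<Sum>a\<in>A. t a b c d)"
    by (rule sum.cong[OF refl], rule sum.cong[OF refl], rule sum.swap)
  also have "\<dots> = (\<Sum>c\<in>C. \<Sum>b\<in>B. \<Sum>d\<in>D. \<Sum>a\<in>A. t a b c d)"
    by (rule sum.swap)
  also have "\<dots> = (\<Sum>c\<in>C. \<Sum>d\<in>D. \<Sum>b\<in>B. \<Sum>a\<in>A. t a b c d)"
    by (rule sum.cong[OF refl], rule sum.swap)
  finally show ?thesis .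
qed

context
  fixes S :: "'a set" and arr :: "'a \<Rightarrow> 'a \<Rightarrow> bool" and top1 :: 'a and X :: 'a
  assumes IS: "info_structure S arr top1" and XS: "X \<in> S"
begin

abbreviation "R \<equiv> alg S arr top1 X"

lemma carrier_alg: "f \<in> carrier R \<longleftrightarrow> finite (supp f) \<and> supp f \<subseteq> SX S arr X"
  by (simp add: alg_def supp_def)

lemma alg_add: "f \<oplus>\<^bsub>R\<^esub> g = (\<lambda>Y. f Y + g Y)" by (simp add: alg_def)
lemma alg_zero: "\<zero>\<^bsub>R\<^esub> = (\<lambda>Y. 0)" by (simp add: alg_def)
lemma alg_one: "\<one>\<^bsub>R\<^esub> = (\<lambda>Y. if Y = top1 then 1 else 0)" by (simp add: alg_def)

lemma supp_mult:
  assumes "f \<in> carrier R" "g \<in> carrier R"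
  shows "supp (f \<otimes>\<^bsub>R\<^esub> g) \<subseteq> (\<lambda>(Y,W). meet S arr Y W) ` (supp f \<times> supp g)"
proof
  fix Z assume Z: "Z \<in> supp (f \<otimes>\<^bsub>R\<^esub> g)"
  have fin: "finite (supp f)" "finite (supp g)" using assms carrier_alg by auto
  show "Z \<in> (\<lambda>(Y,W). meet S arr Y W) ` (supp f \<times> supp g)"
  proof (rule ccontr)
    assume "Z \<notin> (\<lambda>(Y,W). meet S arr Y W) ` (supp f \<times> supp g)"
    then have n: "\<And>Y W. Y \<in> supp f \<Longrightarrow> W \<in> supp g \<Longrightarrow> meet S arr Y W \<noteq> Z" by force
    have "(f \<otimes>\<^bsub>R\<^esub> g) Z = (\<Sum>Y\<in>supp f. \<Sum>W\<in>supp g. if meet S arr Y W = Z then f Y * g W else 0)"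
      by (rule conv_expand[OF fin order_refl order_refl])
    also have "\<dots> = 0" using n by (intro sum.neutral ballI) simp
    finally show False using Z unfolding supp_def by simp
  qed
qed

lemma mult_closed: "f \<in> carrier R \<Longrightarrow> g \<in> carrier R \<Longrightarrow> f \<otimes>\<^bsub>R\<^esub> g \<in> carrier R"
proof -
  assume a: "f \<in> carrier R" "g \<in> carrier R"
  have sf: "supp f \<subseteq> SX S arr X" "supp g \<subseteq> SX S arr X" "finite (supp f)" "finite (supp g)"
    using a carrier_alg by auto
  have i1: "(\<lambda>(Y,W). meet S arr Y W) ` (supp f \<times> supp g) \<subseteq> SX S arr X"
    using sf(1,2) meet_SX[OF IS XS] by auto
  have i2: "finite ((\<lambda>(Y,W). meet S arr Y W) ` (supp f \<times> supp g))"
    using sf(3,4) by simp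
  have "finite (supp (f \<otimes>\<^bsub>R\<^esub> g))" by (rule finite_subset[OF supp_mult[OF a] i2])
  moreover have "supp (f \<otimes>\<^bsub>R\<^esub> g) \<subseteq> SX S arr X" by (rule subset_trans[OF supp_mult[OF a] i1])
  ultimately show ?thesis using carrier_alg by simp
qed

lemma mult_comm: "f \<in> carrier R \<Longrightarrow> g \<in> carrier R \<Longrightarrow> f \<otimes>\<^bsub>R\<^esub> g = g \<otimes>\<^bsub>R\<^esub> f"
proof
  fix Z assume a: "f \<in> carrier R" "g \<in> carrier R"
  have "(f \<otimes>\<^bsub>R\<^esub> g) Z = (\<Sum>Y\<in>supp f. \<Sum>W\<in>supp g. if meet S arr Y W = Z then f Y * g W else 0)"
    using a carrier_alg by (intro conv_expand) auto
  also have "\<dots> = (\<Sum>W\<in>supp g. \<Sum>Y\<in>supp f. if meet S arr W Y = Z then g W * f Y else 0)"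
    by (subst sum.swap, intro sum.cong refl) (simp add: meet_comm[OF IS] mult.commute)
  also have "\<dots> = (g \<otimes>\<^bsub>R\<^esub> f) Z"
    using a carrier_alg by (intro conv_expand[symmetric]) auto
  finally show "(f \<otimes>\<^bsub>R\<^esub> g) Z = (g \<otimes>\<^bsub>R\<^esub> f) Z" .
qed

lemma one_mult: "f \<in> carrier R \<Longrightarrow> \<one>\<^bsub>R\<^esub> \<otimes>\<^bsub>R\<^esub> f = f"
proof
  fix Z assume a: "f \<in> carrier R"
  have "(\<one>\<^bsub>R\<^esub> \<otimes>\<^bsub>R\<^esub> f) Z = (\<Sum>Y\<in>{top1}. \<Sum>W\<in>supp f. if meet S arr Y W = Z then \<one>\<^bsub>R\<^esub> Y * f W else 0)"
    using a carrier_alg by (intro conv_expand) (auto simp: alg_one supp_def)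
  also have "\<dots> = (\<Sum>W\<in>supp f. if meet S arr top1 W = Z then f W else 0)"
    by (simp add: alg_def cong: if_cong)
  also have "\<dots> = (\<Sum>W\<in>supp f. if W = Z then f W else 0)"
  proof (rule sum.cong[OF refl])
    fix W assume "W \<in> supp f"
    then have "W \<in> S" using a carrier_alg unfolding SX_def by auto
    then show "(if meet S arr top1 W = Z then f W else 0) = (if W = Z then f W else 0)"
      by (simp add: meet_comm[OF IS, of top1] meet_top[OF IS])
  qed
  also have "\<dots> = f Z" using a carrier_alg by (simp add: sum.delta' supp_def)
  finally show "(\<one>\<^bsub>R\<^esub> \<otimes>\<^bsub>R\<^esub> f) Z = f Z" .
qed

lemma l_distr: "f \<in> carrier R \<Longrightarrow> g \<in> carrier R \<Longrightarrow> h \<in> carrier R \<Longrightarrow>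
   (f \<oplus>\<^bsub>R\<^esub> g) \<otimes>\<^bsub>R\<^esub> h = f \<otimes>\<^bsub>R\<^esub> h \<oplus>\<^bsub>R\<^esub> g \<otimes>\<^bsub>R\<^esub> h"
proof
  fix Z assume a: "f \<in> carrier R" "g \<in> carrier R" "h \<in> carrier R"
  let ?A = "supp f \<union> supp g"
  have fA: "finite ?A" "finite (supp h)" using a carrier_alg by auto
  have s: "supp f \<subseteq> ?A" "supp g \<subseteq> ?A" "supp (f \<oplus>\<^bsub>R\<^esub> g) \<subseteq> ?A"
    by (auto simp: supp_def alg_add)
  show "((f \<oplus>\<^bsub>R\<^esub> g) \<otimes>\<^bsub>R\<^esub> h) Z = (f \<otimes>\<^bsub>R\<^esub> h \<oplus>\<^bsub>R\<^esub> g \<otimes>\<^bsub>R\<^esub> h) Z"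
    unfolding alg_add[of "f \<otimes>\<^bsub>R\<^esub> h"]
    apply (simp only: conv_expand[OF fA s(1) order_refl] conv_expand[OF fA s(2) order_refl]
       conv_expand[OF fA s(3) order_refl] sum.distrib[symmetric])
    by (rule sum.cong[OF refl], rule sum.cong[OF refl]) (simp add: alg_add distrib_right)
qed

lemma assoc_expand:
  assumes a: "f \<in> carrier R" "g \<in> carrier R" "h \<in> carrier R"
  shows "((f \<otimes>\<^bsub>R\<^esub> g) \<otimes>\<^bsub>R\<^esub> h) Z = (\<Sum>Y\<in>supp f. \<Sum>W\<in>supp g. \<Sum>V\<in>supp h.
      if meet S arr (meet S arr Y W) V = Z then f Y * g W * h V else 0)"
proof -
  let ?C = "(\<lambda>(Y,W). meet S arr Y W) ` (supp f \<times> supp g)"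
  have fin: "finite (supp f)" "finite (supp g)" "finite (supp h)" using a carrier_alg by auto
  then have fC: "finite ?C" by auto
  have "((f \<otimes>\<^bsub>R\<^esub> g) \<otimes>\<^bsub>R\<^esub> h) Z = (\<Sum>P\<in>?C. \<Sum>V\<in>supp h. if meet S arr P V = Z then (f \<otimes>\<^bsub>R\<^esub> g) P * h V else 0)"
    by (rule conv_expand[OF fC fin(3) supp_mult[OF a(1,2)] order_refl])
  also have "\<dots> = (\<Sum>P\<in>?C. \<Sum>V\<in>supp h. \<Sum>Y\<in>supp f. \<Sum>W\<in>supp g.
      if meet S arr Y W = P \<and> meet S arr P V = Z then f Y * g W * h V else 0)"
    by (rule sum.cong[OF refl], rule sum.cong[OF refl])
       (simp add: conv_expand[OF fin(1,2) order_refl order_refl] sum_distrib_right if_distrib if_distribR conj_commute cong: if_cong)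
  also have "\<dots> = (\<Sum>Y\<in>supp f. \<Sum>W\<in>supp g. \<Sum>V\<in>supp h. \<Sum>P\<in>?C.
      if meet S arr Y W = P \<and> meet S arr P V = Z then f Y * g W * h V else 0)"
    by (rule sum_swap4)
  also have "\<dots> = (\<Sum>Y\<in>supp f. \<Sum>W\<in>supp g. \<Sum>V\<in>supp h.
      if meet S arr (meet S arr Y W) V = Z then f Y * g W * h V else 0)"
  proof (intro sum.cong[OF refl])
    fix Y W V assume "Y \<in> supp f" "W \<in> supp g" "V \<in> supp h"
    then have "meet S arr Y W \<in> ?C" by force
    then show "(\<Sum>P\<in>?C. if meet S arr Y W = P \<and> meet S arr P V = Z then f Y * g W * h V else 0) =
      (if meet S arr (meet S arr Y W) V = Z then f Y * g W * h V else 0)"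
    proof -
      have "(\<Sum>P\<in>?C. if meet S arr Y W = P \<and> meet S arr P V = Z then f Y * g W * h V else 0) =
        (\<Sum>P\<in>?C. if meet S arr Y W = P then (if meet S arr (meet S arr Y W) V = Z then f Y * g W * h V else 0) else 0)"
        by (rule sum.cong) auto
      also have "\<dots> = (if meet S arr (meet S arr Y W) V = Z then f Y * g W * h V else 0)"
        using fC \<open>meet S arr Y W \<in> ?C\<close> by (simp only: sum.delta' if_True)
      finally show ?thesis .
    qed
  qed
  finally show ?thesis .
qed

lemma add_closed: "f \<in> carrier R \<Longrightarrow> g \<in> carrier R \<Longrightarrow> f \<oplus>\<^bsub>R\<^esub> g \<in> carrier R"
proof -
  assume a: "f \<in> carrier R" "g \<in> carrier R"
  have "supp (f \<oplus>\<^bsub>R\<^esub> g) \<subseteq> supp f \<union> supp g" by (auto simp: supp_def alg_add)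
  then show ?thesis using a carrier_alg by (meson finite_Un finite_subset le_sup_iff order_trans)
qed

lemma zero_closed: "\<zero>\<^bsub>R\<^esub> \<in> carrier R" by (simp add: carrier_alg alg_zero supp_def)
lemma one_closed: "\<one>\<^bsub>R\<^esub> \<in> carrier R"
proof -
  have "supp \<one>\<^bsub>R\<^esub> = {top1}" by (auto simp: supp_def alg_one)
  moreover have "top1 \<in> SX S arr X" unfolding SX_def using top_in[OF IS] arr_top[OF IS XS] by simp
  ultimately show ?thesis by (simp add: carrier_alg)
qed

lemma mult_assoc: assumes a: "f \<in> carrier R" "g \<in> carrier R" "h \<in> carrier R"
  shows "(f \<otimes>\<^bsub>R\<^esub> g) \<otimes>\<^bsub>R\<^esub> h = f \<otimes>\<^bsub>R\<^esub> (g \<otimes>\<^bsub>R\<^esub> h)"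
proof
  fix Z
  have sf: "supp f \<subseteq> SX S arr X" "supp g \<subseteq> SX S arr X" "supp h \<subseteq> SX S arr X"
    using a carrier_alg by auto
  have "f \<otimes>\<^bsub>R\<^esub> (g \<otimes>\<^bsub>R\<^esub> h) = (g \<otimes>\<^bsub>R\<^esub> h) \<otimes>\<^bsub>R\<^esub> f"
    by (rule mult_comm[OF a(1) mult_closed[OF a(2,3)]])
  then have "(f \<otimes>\<^bsub>R\<^esub> (g \<otimes>\<^bsub>R\<^esub> h)) Z = (\<Sum>W\<in>supp g. \<Sum>V\<in>supp h. \<Sum>Y\<in>supp f.
      if meet S arr (meet S arr W V) Y = Z then g W * h V * f Y else 0)"
    by (simp add: assoc_expand[OF a(2,3,1)])
  also have "\<dots> = (\<Sum>W\<in>supp g. \<Sum>V\<in>supp h. \<Sum>Y\<in>supp f.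
      if meet S arr (meet S arr Y W) V = Z then f Y * g W * h V else 0)"
  proof (intro sum.cong refl)
    fix W V Y assume "W \<in> supp g" "V \<in> supp h" "Y \<in> supp f"
    then have "meet S arr (meet S arr W V) Y = meet S arr (meet S arr Y W) V"
    proof -
      have "Y \<in> SX S arr X" "W \<in> SX S arr X" "V \<in> SX S arr X" using sf \<open>W \<in> supp g\<close> \<open>V \<in> supp h\<close> \<open>Y \<in> supp f\<close> by auto
      then have "meet S arr (meet S arr Y W) V = meet S arr Y (meet S arr W V)" by (rule meet_assoc[OF IS XS])
      then show ?thesis using meet_comm[OF IS, of Y "meet S arr W V"] by simp
    qed
    then show "(if meet S arr (meet S arr W V) Y = Z then g W * h V * f Y else 0) =
      (if meet S arr (meet S arr Y W) V = Z then f Y * g W * h V else 0)" by simp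
  qed
  also have "\<dots> = (\<Sum>W\<in>supp g. \<Sum>Y\<in>supp f. \<Sum>V\<in>supp h.
      if meet S arr (meet S arr Y W) V = Z then f Y * g W * h V else 0)"
    by (intro sum.cong refl sum.swap)
  also have "\<dots> = (\<Sum>Y\<in>supp f. \<Sum>W\<in>supp g. \<Sum>V\<in>supp h.
      if meet S arr (meet S arr Y W) V = Z then f Y * g W * h V else 0)"
    by (rule sum.swap)
  also have "\<dots> = ((f \<otimes>\<^bsub>R\<^esub> g) \<otimes>\<^bsub>R\<^esub> h) Z"
    by (rule assoc_expand[OF a, symmetric])
  finally show "((f \<otimes>\<^bsub>R\<^esub> g) \<otimes>\<^bsub>R\<^esub> h) Z = (f \<otimes>\<^bsub>R\<^esub> (g \<otimes>\<^bsub>R\<^esub> h)) Z" by simp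
qed

lemma alg_cring: "cring R"
proof (rule cringI)
  show "abelian_group R"
  proof (rule abelian_groupI)
    show "\<And>x y. x \<in> carrier R \<Longrightarrow> y \<in> carrier R \<Longrightarrow> x \<oplus>\<^bsub>R\<^esub> y \<in> carrier R" by (rule add_closed)
    show "\<zero>\<^bsub>R\<^esub> \<in> carrier R" by (rule zero_closed)
    show "\<And>x y z. x \<oplus>\<^bsub>R\<^esub> y \<oplus>\<^bsub>R\<^esub> z = x \<oplus>\<^bsub>R\<^esub> (y \<oplus>\<^bsub>R\<^esub> z)" by (simp add: alg_add add.assoc)
    show "\<And>x y. x \<oplus>\<^bsub>R\<^esub> y = y \<oplus>\<^bsub>R\<^esub> x" by (simp add: alg_add add.commute)
    show "\<And>x. \<zero>\<^bsub>R\<^esub> \<oplus>\<^bsub>R\<^esub> x = x" by (simp add: alg_add alg_zero)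
    show "\<exists>y\<in>carrier R. y \<oplus>\<^bsub>R\<^esub> x = \<zero>\<^bsub>R\<^esub>" if "x \<in> carrier R" for x
    proof
      show "(\<lambda>Y. - x Y) \<oplus>\<^bsub>R\<^esub> x = \<zero>\<^bsub>R\<^esub>" by (simp add: alg_add alg_zero)
      have "supp (\<lambda>Y. - x Y) = supp x" by (simp add: supp_def)
      then show "(\<lambda>Y. - x Y) \<in> carrier R" using that carrier_alg by simp
    qed
  qed
  show "comm_monoid R"
    by (rule comm_monoidI) (auto intro: mult_closed one_closed mult_assoc one_mult mult_comm)
  show "\<And>x y z. x \<in> carrier R \<Longrightarrow> y \<in> carrier R \<Longrightarrow> z \<in> carrier R \<Longrightarrow>
    (x \<oplus>\<^bsub>R\<^esub> y) \<otimes>\<^bsub>R\<^esub> z = x \<otimes>\<^bsub>R\<^esub> z \<oplus>\<^bsub>R\<^esub> y \<otimes>\<^bsub>R\<^esub> z" by (rule l_distr)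
qed

end


lemma alg_mult_indep: "f \<otimes>\<^bsub>alg S arr top1 X\<^esub> g = f \<otimes>\<^bsub>alg S arr top1 Y\<^esub> g"
  by (simp add: alg_def)

lemma SX_mono: "info_structure S arr top1 \<Longrightarrow> X \<in> S \<Longrightarrow> Y \<in> S \<Longrightarrow> arr X Y \<Longrightarrow> SX S arr Y \<subseteq> SX S arr X"
proof
  fix Z assume a: "info_structure S arr top1" "X \<in> S" "Y \<in> S" "arr X Y" and Z: "Z \<in> SX S arr Y"
  then have "Z \<in> S" "arr Y Z" unfolding SX_def by auto
  then have "arr X Z" using trans'[OF a(1,2,3)] a(4) by blast
  then show "Z \<in> SX S arr X" using \<open>Z \<in> S\<close> unfolding SX_def by simp
qed

lemma alg_carrier_mono: "info_structure S arr top1 \<Longrightarrow> X \<in> S \<Longrightarrow> Y \<in> S \<Longrightarrow> arr X Y \<Longrightarrow>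
  carrier (alg S arr top1 Y) \<subseteq> carrier (alg S arr top1 X)"
  using SX_mono[of S arr top1 X Y] by (auto simp: alg_def)

lemma Bsym_mono: "info_structure S arr top1 \<Longrightarrow> X \<in> S \<Longrightarrow> Y \<in> S \<Longrightarrow> arr X Y \<Longrightarrow> Bsym S arr n Y \<subseteq> Bsym S arr n X"
  using SX_mono[of S arr top1 X Y] by (auto simp: Bsym_def)

lemma Bcarrier_mono: "info_structure S arr top1 \<Longrightarrow> X \<in> S \<Longrightarrow> Y \<in> S \<Longrightarrow> arr X Y \<Longrightarrow>
  carrier (Bmod S arr top1 n Y) \<subseteq> carrier (Bmod S arr top1 n X)"
proof -
  assume a: "info_structure S arr top1" "X \<in> S" "Y \<in> S" "arr X Y"
  note c = alg_carrier_mono[OF a] Bsym_mono[OF a, of n]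
  show ?thesis unfolding Bmod_def using c by (auto simp del: Bmod_def)
qed

lemma Bmod_add: "m \<oplus>\<^bsub>Bmod S arr top1 n X\<^esub> m' = (\<lambda>s. m s \<oplus>\<^bsub>alg S arr top1 X\<^esub> m' s)"
  by (simp add: Bmod_def alg_def)
lemma Bmod_zero: "\<zero>\<^bsub>Bmod S arr top1 n X\<^esub> = (\<lambda>s. \<zero>\<^bsub>alg S arr top1 X\<^esub>)"
  by (simp add: Bmod_def alg_def)
lemma Bmod_smult: "a \<odot>\<^bsub>Bmod S arr top1 n X\<^esub> m = (\<lambda>s. a \<otimes>\<^bsub>alg S arr top1 X\<^esub> m s)"
  by (simp add: Bmod_def)
lemma Bmod_carrier: "m \<in> carrier (Bmod S arr top1 n X) \<longleftrightarrow>
   finite {s. m s \<noteq> \<zero>\<^bsub>alg S arr top1 X\<^esub>} \<and> (\<forall>s. m s \<in> carrier (alg S arr top1 X)) \<and>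
   (\<forall>s. m s \<noteq> \<zero>\<^bsub>alg S arr top1 X\<^esub> \<longrightarrow> s \<in> Bsym S arr n X)"
  by (simp add: Bmod_def alg_def)

context
  fixes S :: "'a set" and arr :: "'a \<Rightarrow> 'a \<Rightarrow> bool" and top1 :: 'a and X :: 'a and n :: nat
  assumes IS: "info_structure S arr top1" and XS: "X \<in> S"
begin

lemma Bmod_module: "module (alg S arr top1 X) (Bmod S arr top1 n X)"
proof -
  interpret R: cring "alg S arr top1 X" by (rule alg_cring[OF IS XS])
  let ?R = "alg S arr top1 X"
  let ?M = "Bmod S arr top1 n X"
  show ?thesis
  proof (rule moduleI)
    show "cring ?R" by (rule R.cring_axioms)
    show "abelian_group ?M"
    proof (rule abelian_groupI)
      show "x \<oplus>\<^bsub>?M\<^esub> y \<in> carrier ?M" if "x \<in> carrier ?M" "y \<in> carrier ?M" for x y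
      proof -
        have sub: "{s. x s \<oplus>\<^bsub>?R\<^esub> y s \<noteq> \<zero>\<^bsub>?R\<^esub>} \<subseteq> {s. x s \<noteq> \<zero>\<^bsub>?R\<^esub>} \<union> {s. y s \<noteq> \<zero>\<^bsub>?R\<^esub>}"
          using that by (auto simp: Bmod_carrier)
        have fx: "finite {s. x s \<noteq> \<zero>\<^bsub>?R\<^esub>}" "finite {s. y s \<noteq> \<zero>\<^bsub>?R\<^esub>}"
          using that unfolding Bmod_carrier by blast+
        have "finite {s. x s \<oplus>\<^bsub>?R\<^esub> y s \<noteq> \<zero>\<^bsub>?R\<^esub>}"
          by (rule finite_subset[OF sub]) (use fx in simp)
        moreover have "\<forall>s. x s \<oplus>\<^bsub>?R\<^esub> y s \<in> carrier ?R" using that unfolding Bmod_carrier by simp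
        moreover have "\<forall>s. x s \<oplus>\<^bsub>?R\<^esub> y s \<noteq> \<zero>\<^bsub>?R\<^esub> \<longrightarrow> s \<in> Bsym S arr n X"
          using that sub unfolding Bmod_carrier by blast
        ultimately show ?thesis unfolding Bmod_carrier Bmod_add by simp
      qed
      show "\<zero>\<^bsub>?M\<^esub> \<in> carrier ?M" by (simp add: Bmod_carrier Bmod_zero)
      show "x \<oplus>\<^bsub>?M\<^esub> y \<oplus>\<^bsub>?M\<^esub> z = x \<oplus>\<^bsub>?M\<^esub> (y \<oplus>\<^bsub>?M\<^esub> z)"
        if "x \<in> carrier ?M" "y \<in> carrier ?M" "z \<in> carrier ?M" for x y z
        using that by (simp add: Bmod_add Bmod_carrier R.a_assoc)
      show "x \<oplus>\<^bsub>?M\<^esub> y = y \<oplus>\<^bsub>?M\<^esub> x" if "x \<in> carrier ?M" "y \<in> carrier ?M" for x y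
        using that by (simp add: Bmod_add Bmod_carrier R.a_comm)
      show "\<zero>\<^bsub>?M\<^esub> \<oplus>\<^bsub>?M\<^esub> x = x" if "x \<in> carrier ?M" for x
        using that by (simp add: Bmod_add Bmod_carrier Bmod_zero)
      show "\<exists>y\<in>carrier ?M. y \<oplus>\<^bsub>?M\<^esub> x = \<zero>\<^bsub>?M\<^esub>" if "x \<in> carrier ?M" for x
      proof
        show "(\<lambda>s. \<ominus>\<^bsub>?R\<^esub> x s) \<oplus>\<^bsub>?M\<^esub> x = \<zero>\<^bsub>?M\<^esub>"
          using that by (simp add: Bmod_add Bmod_carrier Bmod_zero R.l_neg)
        show "(\<lambda>s. \<ominus>\<^bsub>?R\<^esub> x s) \<in> carrier ?M"
        proof -
          have e: "\<And>s. (\<ominus>\<^bsub>?R\<^esub> x s \<noteq> \<zero>\<^bsub>?R\<^esub>) = (x s \<noteq> \<zero>\<^bsub>?R\<^esub>)"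
            using that unfolding Bmod_carrier by (simp add: R.add.inv_eq_1_iff)
          show ?thesis using that unfolding Bmod_carrier e by simp
        qed
      qed
    qed
    show "a \<odot>\<^bsub>?M\<^esub> x \<in> carrier ?M" if "a \<in> carrier ?R" "x \<in> carrier ?M" for a x
    proof -
      have sub: "{s. a \<otimes>\<^bsub>?R\<^esub> x s \<noteq> \<zero>\<^bsub>?R\<^esub>} \<subseteq> {s. x s \<noteq> \<zero>\<^bsub>?R\<^esub>}"
        using that by auto
      have fx: "finite {s. x s \<noteq> \<zero>\<^bsub>?R\<^esub>}" using that unfolding Bmod_carrier by blast
      have "finite {s. a \<otimes>\<^bsub>?R\<^esub> x s \<noteq> \<zero>\<^bsub>?R\<^esub>}" by (rule finite_subset[OF sub fx])
      moreover have "\<forall>s. a \<otimes>\<^bsub>?R\<^esub> x s \<in> carrier ?R" using that unfolding Bmod_carrier by simp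
      moreover have "\<forall>s. a \<otimes>\<^bsub>?R\<^esub> x s \<noteq> \<zero>\<^bsub>?R\<^esub> \<longrightarrow> s \<in> Bsym S arr n X"
        using that sub unfolding Bmod_carrier by blast
      ultimately show ?thesis unfolding Bmod_carrier Bmod_smult by simp
    qed
    show "(a \<oplus>\<^bsub>?R\<^esub> b) \<odot>\<^bsub>?M\<^esub> x = a \<odot>\<^bsub>?M\<^esub> x \<oplus>\<^bsub>?M\<^esub> b \<odot>\<^bsub>?M\<^esub> x"
      if "a \<in> carrier ?R" "b \<in> carrier ?R" "x \<in> carrier ?M" for a b x
      using that by (simp add: Bmod_add Bmod_smult Bmod_carrier R.l_distr)
    show "a \<odot>\<^bsub>?M\<^esub> (x \<oplus>\<^bsub>?M\<^esub> y) = a \<odot>\<^bsub>?M\<^esub> x \<oplus>\<^bsub>?M\<^esub> a \<odot>\<^bsub>?M\<^esub> y"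
      if "a \<in> carrier ?R" "x \<in> carrier ?M" "y \<in> carrier ?M" for a x y
      using that by (simp add: Bmod_add Bmod_smult Bmod_carrier R.r_distr)
    show "(a \<otimes>\<^bsub>?R\<^esub> b) \<odot>\<^bsub>?M\<^esub> x = a \<odot>\<^bsub>?M\<^esub> (b \<odot>\<^bsub>?M\<^esub> x)"
      if "a \<in> carrier ?R" "b \<in> carrier ?R" "x \<in> carrier ?M" for a b x
      using that by (simp add: Bmod_smult Bmod_carrier R.m_assoc)
    show "\<one>\<^bsub>?R\<^esub> \<odot>\<^bsub>?M\<^esub> x = x" if "x \<in> carrier ?M" for x
      using that by (simp add: Bmod_smult Bmod_carrier)
  qed
qed

end

lemma B_presheaf:
  assumes IS: "info_structure S arr top1"
  shows "presheaf_mod S arr top1 (Bmod S arr top1 n) Bres"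
  unfolding presheaf_mod_def
proof (intro conjI ballI impI)
  show "module (alg S arr top1 X) (Bmod S arr top1 n X)" if "X \<in> S" for X
    by (rule Bmod_module[OF IS that])
  fix X Y assume XY: "X \<in> S" "Y \<in> S" "arr X Y"
  show "Bres X Y \<in> carrier (Bmod S arr top1 n Y) \<rightarrow> carrier (Bmod S arr top1 n X)"
    using Bcarrier_mono[OF IS XY, of n] unfolding Bres_def by blast
  show "Bres X Y (x \<oplus>\<^bsub>Bmod S arr top1 n Y\<^esub> y) = Bres X Y x \<oplus>\<^bsub>Bmod S arr top1 n X\<^esub> Bres X Y y" for x y
    by (simp add: Bres_def Bmod_def)
  show "Bres X Y (a \<odot>\<^bsub>Bmod S arr top1 n Y\<^esub> x) = a \<odot>\<^bsub>Bmod S arr top1 n X\<^esub> Bres X Y x" for a x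
    by (simp add: Bres_def Bmod_smult alg_mult_indep[where X=Y and Y=X])
qed (auto simp: Bres_def)



lemma hom_finsum:
  assumes M: "abelian_group M" and N: "abelian_group N" and h: "h \<in> carrier M \<rightarrow> carrier N"
    and add: "\<And>x y. x \<in> carrier M \<Longrightarrow> y \<in> carrier M \<Longrightarrow> h (x \<oplus>\<^bsub>M\<^esub> y) = h x \<oplus>\<^bsub>N\<^esub> h y"
    and fin: "finite A" and u: "u \<in> A \<rightarrow> carrier M"
  shows "h (finsum M u A) = finsum N (\<lambda>a. h (u a)) A"
proof -
  interpret M: abelian_group M by (rule M)
  interpret N: abelian_group N by (rule N)
  have hz: "h \<zero>\<^bsub>M\<^esub> \<in> carrier N" using h by auto
  have "h \<zero>\<^bsub>M\<^esub> = h \<zero>\<^bsub>M\<^esub> \<oplus>\<^bsub>N\<^esub> h \<zero>\<^bsub>M\<^esub>" using add[of "\<zero>\<^bsub>M\<^esub>" "\<zero>\<^bsub>M\<^esub>"] by simp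
  then have h0: "h \<zero>\<^bsub>M\<^esub> = \<zero>\<^bsub>N\<^esub>" using hz by (metis N.add.r_cancel_one')
  show ?thesis using fin u
  proof (induction A rule: finite_induct)
    case empty then show ?case using h0 by simp
  next
    case (insert a A)
    then have ua: "u a \<in> carrier M" and uA: "u \<in> A \<rightarrow> carrier M" by auto
    have hu: "(\<lambda>a. h (u a)) \<in> insert a A \<rightarrow> carrier N" using insert.prems h by auto
    have "h (finsum M u (insert a A)) = h (u a \<oplus>\<^bsub>M\<^esub> finsum M u A)"
      using insert.hyps ua uA by (simp add: M.finsum_insert)
    also have "\<dots> = h (u a) \<oplus>\<^bsub>N\<^esub> h (finsum M u A)" by (rule add[OF ua M.finsum_closed[OF uA]])
    also have "\<dots> = h (u a) \<oplus>\<^bsub>N\<^esub> finsum N (\<lambda>a. h (u a)) A" using insert.IH[OF uA] by simp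
    also have "\<dots> = finsum N (\<lambda>a. h (u a)) (insert a A)"
      using insert.hyps hu by (simp add: N.finsum_insert)
    finally show ?case .
  qed
qed

lemma Bfinsum:
  assumes IS: "info_structure S arr top1" and XS: "X \<in> S" and fin: "finite A"
    and h: "h \<in> A \<rightarrow> carrier (Bmod S arr top1 n X)"
  shows "finsum (Bmod S arr top1 n X) h A = (\<lambda>t Y. \<Sum>s\<in>A. h s t Y)"
  using fin h
proof (induction A rule: finite_induct)
  case empty
  interpret M: module "alg S arr top1 X" "Bmod S arr top1 n X" by (rule Bmod_module[OF IS XS])
  show ?case by (simp add: Bmod_zero alg_zero[OF IS XS])
next
  case (insert a A)
  interpret M: module "alg S arr top1 X" "Bmod S arr top1 n X" by (rule Bmod_module[OF IS XS])
  have "finsum (Bmod S arr top1 n X) h (insert a A) = h a \<oplus>\<^bsub>Bmod S arr top1 n X\<^esub> finsum (Bmod S arr top1 n X) h A"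
    using insert by (simp add: M.finsum_insert)
  then show ?case using insert by (simp add: Bmod_add alg_add[OF IS XS])
qed

definition Mlist :: "'a set \<Rightarrow> ('a \<Rightarrow> 'a \<Rightarrow> bool) \<Rightarrow> 'a \<Rightarrow> 'a list \<Rightarrow> 'a" where
  "Mlist S arr top1 xs = foldr (meet S arr) xs top1"

lemma Mlist_props:
  assumes IS: "info_structure S arr top1" and XS: "X \<in> S"
  shows "set xs \<subseteq> SX S arr X \<Longrightarrow> Mlist S arr top1 xs \<in> SX S arr X \<and> (\<forall>x\<in>set xs. arr (Mlist S arr top1 xs) x)"
proof (induction xs)
  case Nil
  then show ?case using top_in[OF IS] arr_top[OF IS XS] by (simp add: Mlist_def SX_def)
next
  case (Cons x xs)
  then have x: "x \<in> SX S arr X" and IH: "Mlist S arr top1 xs \<in> SX S arr X" "\<forall>y\<in>set xs. arr (Mlist S arr top1 xs) y"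
    by auto
  have e: "Mlist S arr top1 (x # xs) = meet S arr x (Mlist S arr top1 xs)" by (simp add: Mlist_def)
  have m: "meet S arr x (Mlist S arr top1 xs) \<in> SX S arr X" by (rule meet_SX[OF IS XS x IH(1)])
  have m1: "arr (meet S arr x (Mlist S arr top1 xs)) x" by (rule meet_le1[OF IS XS x IH(1)])
  have m2: "arr (meet S arr x (Mlist S arr top1 xs)) (Mlist S arr top1 xs)" by (rule meet_le2[OF IS XS x IH(1)])
  have "\<forall>y\<in>set xs. arr (meet S arr x (Mlist S arr top1 xs)) y"
  proof
    fix y assume y: "y \<in> set xs"
    then have "y \<in> S" using Cons.prems unfolding SX_def by auto
    moreover have "meet S arr x (Mlist S arr top1 xs) \<in> S" "Mlist S arr top1 xs \<in> S" using m IH(1) unfolding SX_def by auto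
    ultimately show "arr (meet S arr x (Mlist S arr top1 xs)) y"
      using trans'[OF IS] m2 IH(2) y by blast
  qed
  then show ?case using e m m1 by simp
qed

definition delta :: "'a \<Rightarrow> 'a list \<Rightarrow> 'a list \<Rightarrow> 'a \<Rightarrow> real" where
  "delta top1 s = (\<lambda>t. if t = s then (\<lambda>Y. if Y = top1 then 1 else 0) else (\<lambda>Y. 0))"

lemma delta_carrier:
  assumes IS: "info_structure S arr top1" and XS: "X \<in> S" and s: "s \<in> Bsym S arr n X"
  shows "delta top1 s \<in> carrier (Bmod S arr top1 n X)"
proof -
  have o: "(\<lambda>Y. if Y = top1 then 1 else 0) \<in> carrier (alg S arr top1 X)"
    using one_closed[OF IS XS] by (simp add: alg_one[OF IS XS])
  have z: "(\<lambda>Y. 0::real) \<in> carrier (alg S arr top1 X)"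
    using zero_closed[OF IS XS] by (simp add: alg_zero[OF IS XS])
  have "{t. delta top1 s t \<noteq> \<zero>\<^bsub>alg S arr top1 X\<^esub>} \<subseteq> {s}"
    by (auto simp: delta_def alg_zero[OF IS XS])
  then have "finite {t. delta top1 s t \<noteq> \<zero>\<^bsub>alg S arr top1 X\<^esub>}" by (rule finite_subset) simp
  moreover have "\<forall>t. delta top1 s t \<in> carrier (alg S arr top1 X)" using o z by (simp add: delta_def)
  moreover have "\<forall>t. delta top1 s t \<noteq> \<zero>\<^bsub>alg S arr top1 X\<^esub> \<longrightarrow> t \<in> Bsym S arr n X"
    using s by (simp add: delta_def alg_zero[OF IS XS])
  ultimately show ?thesis unfolding Bmod_carrier by blast
qed

lemma B_expand:
  assumes IS: "info_structure S arr top1" and XS: "X \<in> S" and m: "m \<in> carrier (Bmod S arr top1 n X)"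
  shows "finsum (Bmod S arr top1 n X) (\<lambda>s. m s \<odot>\<^bsub>Bmod S arr top1 n X\<^esub> delta top1 s) {s. m s \<noteq> (\<lambda>Y. 0)} = m"
proof -
  interpret R: cring "alg S arr top1 X" by (rule alg_cring[OF IS XS])
  interpret M: module "alg S arr top1 X" "Bmod S arr top1 n X" by (rule Bmod_module[OF IS XS])
  let ?A = "{s. m s \<noteq> (\<lambda>Y. 0)}"
  have mc: "finite ?A" "\<And>s. m s \<in> carrier (alg S arr top1 X)" "\<And>s. m s \<noteq> (\<lambda>Y. 0) \<Longrightarrow> s \<in> Bsym S arr n X"
    using m unfolding Bmod_carrier alg_zero[OF IS XS] by auto
  have dc: "\<And>s. s \<in> ?A \<Longrightarrow> delta top1 s \<in> carrier (Bmod S arr top1 n X)"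
    using delta_carrier[OF IS XS] mc(3) by blast
  have hc: "(\<lambda>s. m s \<odot>\<^bsub>Bmod S arr top1 n X\<^esub> delta top1 s) \<in> ?A \<rightarrow> carrier (Bmod S arr top1 n X)"
    using dc mc(2) by auto
  have tm: "(m s \<odot>\<^bsub>Bmod S arr top1 n X\<^esub> delta top1 s) t Y = (if t = s then m s Y else 0)" for s t Y
  proof -
    have "(m s \<odot>\<^bsub>Bmod S arr top1 n X\<^esub> delta top1 s) t = m s \<otimes>\<^bsub>alg S arr top1 X\<^esub> delta top1 s t"
      by (simp add: Bmod_smult)
    also have "\<dots> = (if t = s then m s else (\<lambda>Y. 0))"
      using mc(2)[of s] by (simp add: delta_def alg_one[OF IS XS, symmetric] alg_zero[OF IS XS, symmetric])
    finally show ?thesis by simp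
  qed
  show ?thesis
  proof (intro ext)
    fix t Y
    have "finsum (Bmod S arr top1 n X) (\<lambda>s. m s \<odot>\<^bsub>Bmod S arr top1 n X\<^esub> delta top1 s) ?A t Y
      = (\<Sum>s\<in>?A. if t = s then m s Y else 0)"
      by (simp add: Bfinsum[OF IS XS mc(1) hc] tm)
    also have "\<dots> = m t Y" using mc(1) by (auto simp: sum.delta)
    finally show "finsum (Bmod S arr top1 n X) (\<lambda>s. m s \<odot>\<^bsub>Bmod S arr top1 n X\<^esub> delta top1 s) ?A t Y = m t Y" .
  qed
qed



lemma Bcar:
  assumes IS: "info_structure S arr top1" and XS: "X \<in> S" and m: "m \<in> carrier (Bmod S arr top1 n X)"
  shows "finite {s. m s \<noteq> (\<lambda>Y. 0)}" "{s. m s \<noteq> (\<lambda>Y. 0)} \<subseteq> Bsym S arr n X" "\<And>s. m s \<in> carrier (alg S arr top1 X)"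
  using m unfolding Bmod_carrier alg_zero[OF IS XS] by auto

lemma Msym:
  assumes IS: "info_structure S arr top1" and XS: "X \<in> S" and s: "s \<in> Bsym S arr n X"
  shows "Mlist S arr top1 s \<in> S" "arr X (Mlist S arr top1 s)" "s \<in> Bsym S arr n (Mlist S arr top1 s)"
proof -
  have ss: "set s \<subseteq> SX S arr X" "length s = n" using s unfolding Bsym_def by auto
  note P = Mlist_props[OF IS XS ss(1)]
  show "Mlist S arr top1 s \<in> S" "arr X (Mlist S arr top1 s)" using P unfolding SX_def by auto
  have "set s \<subseteq> SX S arr (Mlist S arr top1 s)" using P ss(1) unfolding SX_def by auto
  then show "s \<in> Bsym S arr n (Mlist S arr top1 s)" using ss(2) unfolding Bsym_def by simp
qed

theorem proposition3p5:
  fixes S :: "'a set" and arr :: "'a \<Rightarrow> 'a \<Rightarrow> bool" and top1 :: 'a and n :: nat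
  assumes "info_structure S arr top1"
  shows "projective TYPE('m) TYPE('n) S arr top1 (Bmod S arr top1 n) Bres"
proof -
  note IS = assms
  let ?B = "Bmod S arr top1 n"
  let ?R = "alg S arr top1"
  show ?thesis unfolding projective_def
  proof (intro conjI allI impI)
    show "presheaf_mod S arr top1 ?B Bres" by (rule B_presheaf[OF IS])
    fix F :: "'a \<Rightarrow> ('a \<Rightarrow> real, 'm) module" and resF and G :: "'a \<Rightarrow> ('a \<Rightarrow> real, 'n) module"
      and resG e f
    assume PF: "presheaf_mod S arr top1 F resF" and PG: "presheaf_mod S arr top1 G resG"
      and EE: "presheaf_mod_epi S arr top1 F resF G resG e"
      and FH: "presheaf_mod_hom S arr top1 ?B Bres G resG f"
    have Fmod: "\<And>X. X \<in> S \<Longrightarrow> module (?R X) (F X)" using PF unfolding presheaf_mod_def by blast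
    have Gmod: "\<And>X. X \<in> S \<Longrightarrow> module (?R X) (G X)" using PG unfolding presheaf_mod_def by blast
    have Bmodx: "\<And>X. X \<in> S \<Longrightarrow> module (?R X) (?B X)" by (rule Bmod_module[OF IS])
    have Fres: "\<And>X Y. X \<in> S \<Longrightarrow> Y \<in> S \<Longrightarrow> arr X Y \<Longrightarrow> resF X Y \<in> carrier (F Y) \<rightarrow> carrier (F X)"
      using PF unfolding presheaf_mod_def by blast
    have Fres_add: "\<And>X Y x y. X \<in> S \<Longrightarrow> Y \<in> S \<Longrightarrow> arr X Y \<Longrightarrow> x \<in> carrier (F Y) \<Longrightarrow> y \<in> carrier (F Y) \<Longrightarrow>
       resF X Y (x \<oplus>\<^bsub>F Y\<^esub> y) = resF X Y x \<oplus>\<^bsub>F X\<^esub> resF X Y y"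
      using PF unfolding presheaf_mod_def by blast
    have Fres_smult: "\<And>X Y a x. X \<in> S \<Longrightarrow> Y \<in> S \<Longrightarrow> arr X Y \<Longrightarrow> a \<in> carrier (?R Y) \<Longrightarrow> x \<in> carrier (F Y) \<Longrightarrow>
       resF X Y (a \<odot>\<^bsub>F Y\<^esub> x) = a \<odot>\<^bsub>F X\<^esub> resF X Y x"
      using PF unfolding presheaf_mod_def by blast
    have Fres_comp: "\<And>X Y Z x. X \<in> S \<Longrightarrow> Y \<in> S \<Longrightarrow> Z \<in> S \<Longrightarrow> arr X Y \<Longrightarrow> arr Y Z \<Longrightarrow> x \<in> carrier (F Z) \<Longrightarrow>
       resF X Y (resF Y Z x) = resF X Z x"
      using PF unfolding presheaf_mod_def by blast
    have e_cl: "\<And>X. X \<in> S \<Longrightarrow> e X \<in> carrier (F X) \<rightarrow> carrier (G X)"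
      using EE unfolding presheaf_mod_epi_def presheaf_mod_hom_def by blast
    have e_add: "\<And>X x y. X \<in> S \<Longrightarrow> x \<in> carrier (F X) \<Longrightarrow> y \<in> carrier (F X) \<Longrightarrow>
       e X (x \<oplus>\<^bsub>F X\<^esub> y) = e X x \<oplus>\<^bsub>G X\<^esub> e X y"
      using EE unfolding presheaf_mod_epi_def presheaf_mod_hom_def by blast
    have e_smult: "\<And>X a x. X \<in> S \<Longrightarrow> a \<in> carrier (?R X) \<Longrightarrow> x \<in> carrier (F X) \<Longrightarrow>
       e X (a \<odot>\<^bsub>F X\<^esub> x) = a \<odot>\<^bsub>G X\<^esub> e X x"
      using EE unfolding presheaf_mod_epi_def presheaf_mod_hom_def by blast
    have e_nat: "\<And>X Y x. X \<in> S \<Longrightarrow> Y \<in> S \<Longrightarrow> arr X Y \<Longrightarrow> x \<in> carrier (F Y) \<Longrightarrow>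
       e X (resF X Y x) = resG X Y (e Y x)"
      using EE unfolding presheaf_mod_epi_def presheaf_mod_hom_def by blast
    have e_surj: "\<And>X. X \<in> S \<Longrightarrow> e X ` carrier (F X) = carrier (G X)"
      using EE unfolding presheaf_mod_epi_def by blast
    have f_cl: "\<And>X. X \<in> S \<Longrightarrow> f X \<in> carrier (?B X) \<rightarrow> carrier (G X)"
      using FH unfolding presheaf_mod_hom_def by blast
    have f_add: "\<And>X x y. X \<in> S \<Longrightarrow> x \<in> carrier (?B X) \<Longrightarrow> y \<in> carrier (?B X) \<Longrightarrow>
       f X (x \<oplus>\<^bsub>?B X\<^esub> y) = f X x \<oplus>\<^bsub>G X\<^esub> f X y"
      using FH unfolding presheaf_mod_hom_def by blast
    have f_smult: "\<And>X a x. X \<in> S \<Longrightarrow> a \<in> carrier (?R X) \<Longrightarrow> x \<in> carrier (?B X) \<Longrightarrow>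
       f X (a \<odot>\<^bsub>?B X\<^esub> x) = a \<odot>\<^bsub>G X\<^esub> f X x"
      using FH unfolding presheaf_mod_hom_def by blast
    have f_nat: "\<And>X Y x. X \<in> S \<Longrightarrow> Y \<in> S \<Longrightarrow> arr X Y \<Longrightarrow> x \<in> carrier (?B Y) \<Longrightarrow>
       f X (Bres X Y x) = resG X Y (f Y x)"
      using FH unfolding presheaf_mod_hom_def by blast

    define M where "M = Mlist S arr top1"
    define u where "u s = (SOME v. v \<in> carrier (F (M s)) \<and> e (M s) v = f (M s) (delta top1 s))" for s
    have u_prop: "u s \<in> carrier (F (M s)) \<and> e (M s) (u s) = f (M s) (delta top1 s)"
      if "X \<in> S" "s \<in> Bsym S arr n X" for X s
    proof -
      have MS: "M s \<in> S" "s \<in> Bsym S arr n (M s)" using Msym[OF IS that] unfolding M_def by auto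
      have "delta top1 s \<in> carrier (?B (M s))" by (rule delta_carrier[OF IS MS])
      then have "f (M s) (delta top1 s) \<in> carrier (G (M s))" using f_cl[OF MS(1)] by blast
      then have "\<exists>v. v \<in> carrier (F (M s)) \<and> e (M s) v = f (M s) (delta top1 s)"
        using e_surj[OF MS(1)] by (metis imageE)
      then show ?thesis unfolding u_def by (rule someI_ex)
    qed
    define tm where "tm X m s = m s \<odot>\<^bsub>F X\<^esub> resF X (M s) (u s)" for X m s
    define g where "g X m = finsum (F X) (tm X m) {s. m s \<noteq> (\<lambda>Y. 0)}" for X m

    have v_cl: "resF X (M s) (u s) \<in> carrier (F X)" if "X \<in> S" "s \<in> Bsym S arr n X" for X s
    proof -
      have "M s \<in> S" "arr X (M s)" using Msym[OF IS that] unfolding M_def by auto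
      then show ?thesis using Fres[OF that(1)] u_prop[OF that] by blast
    qed
    have tm_cl: "tm X m s \<in> carrier (F X)" if "X \<in> S" "s \<in> Bsym S arr n X" "m \<in> carrier (?B X)" for X m s
    proof -
      interpret FX: module "?R X" "F X" by (rule Fmod[OF that(1)])
      show ?thesis unfolding tm_def using v_cl[OF that(1,2)] Bcar(3)[OF IS that(1,3)] by simp
    qed
    have g_sup: "g X m = finsum (F X) (tm X m) T"
      if "X \<in> S" "m \<in> carrier (?B X)" "finite T" "{s. m s \<noteq> (\<lambda>Y. 0)} \<subseteq> T" "T \<subseteq> Bsym S arr n X" for X m T
    proof -
      interpret FX: module "?R X" "F X" by (rule Fmod[OF that(1)])
      have "tm X m s = \<zero>\<^bsub>F X\<^esub>" if "s \<in> T - {s. m s \<noteq> (\<lambda>Y. 0)}" for s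
      proof -
        have "m s = \<zero>\<^bsub>?R X\<^esub>" using that alg_zero[OF IS \<open>X \<in> S\<close>] by simp
        moreover have "s \<in> Bsym S arr n X" using that \<open>T \<subseteq> _\<close> by blast
        ultimately show ?thesis unfolding tm_def using FX.smult_l_null[OF v_cl[OF \<open>X \<in> S\<close>]] by simp
      qed
      moreover have "tm X m \<in> T \<rightarrow> carrier (F X)" using tm_cl that by blast
      ultimately show ?thesis unfolding g_def
        by (intro FX.add.finprod_mono_neutral_cong_left) (use that in auto)
    qed
    have g_cl: "g X m \<in> carrier (F X)" if "X \<in> S" "m \<in> carrier (?B X)" for X m
    proof -
      interpret FX: module "?R X" "F X" by (rule Fmod[OF that(1)])
      show ?thesis unfolding g_def using tm_cl[OF that(1) _ that(2)] Bcar[OF IS that] by (intro FX.finsum_closed) blast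
    qed
    have g_add: "g X (x \<oplus>\<^bsub>?B X\<^esub> y) = g X x \<oplus>\<^bsub>F X\<^esub> g X y"
      if XS: "X \<in> S" and xy: "x \<in> carrier (?B X)" "y \<in> carrier (?B X)" for X x y
    proof -
      interpret FX: module "?R X" "F X" by (rule Fmod[OF XS])
      interpret BX: module "?R X" "?B X" by (rule Bmodx[OF XS])
      let ?T = "{s. x s \<noteq> (\<lambda>Y. 0)} \<union> {s. y s \<noteq> (\<lambda>Y. 0)}"
      have xyc: "x \<oplus>\<^bsub>?B X\<^esub> y \<in> carrier (?B X)" using xy by simp
      have T: "finite ?T" "?T \<subseteq> Bsym S arr n X" using Bcar[OF IS XS xy(1)] Bcar[OF IS XS xy(2)] by auto
      have sub: "{s. (x \<oplus>\<^bsub>?B X\<^esub> y) s \<noteq> (\<lambda>Y. 0)} \<subseteq> ?T"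
        by (auto simp: Bmod_add alg_add[OF IS XS])
      have c1: "tm X x \<in> ?T \<rightarrow> carrier (F X)" "tm X y \<in> ?T \<rightarrow> carrier (F X)"
        using tm_cl[OF XS _ xy(1)] tm_cl[OF XS _ xy(2)] T(2) by blast+
      have "g X (x \<oplus>\<^bsub>?B X\<^esub> y) = finsum (F X) (tm X (x \<oplus>\<^bsub>?B X\<^esub> y)) ?T"
        by (rule g_sup[OF XS xyc T(1) sub T(2)])
      also have "\<dots> = finsum (F X) (\<lambda>s. tm X x s \<oplus>\<^bsub>F X\<^esub> tm X y s) ?T"
      proof (rule FX.finsum_cong')
        show "(\<lambda>s. tm X x s \<oplus>\<^bsub>F X\<^esub> tm X y s) \<in> ?T \<rightarrow> carrier (F X)" using c1 by auto
        fix s assume "s \<in> ?T"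
        then have sB: "s \<in> Bsym S arr n X" using T(2) by blast
        show "tm X (x \<oplus>\<^bsub>?B X\<^esub> y) s = tm X x s \<oplus>\<^bsub>F X\<^esub> tm X y s"
          unfolding tm_def Bmod_add
          by (rule FX.smult_l_distr[OF Bcar(3)[OF IS XS xy(1)] Bcar(3)[OF IS XS xy(2)] v_cl[OF XS sB]])
      qed simp
      also have "\<dots> = finsum (F X) (tm X x) ?T \<oplus>\<^bsub>F X\<^esub> finsum (F X) (tm X y) ?T"
        by (rule FX.finsum_addf[OF c1])
      also have "\<dots> = g X x \<oplus>\<^bsub>F X\<^esub> g X y"
        using g_sup[OF XS xy(1) T(1) _ T(2)] g_sup[OF XS xy(2) T(1) _ T(2)] by auto
      finally show ?thesis .
    qed
    have g_smult: "g X (a \<odot>\<^bsub>?B X\<^esub> x) = a \<odot>\<^bsub>F X\<^esub> g X x"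
      if XS: "X \<in> S" and a: "a \<in> carrier (?R X)" and x: "x \<in> carrier (?B X)" for X a x
    proof -
      interpret FX: module "?R X" "F X" by (rule Fmod[OF XS])
      interpret BX: module "?R X" "?B X" by (rule Bmodx[OF XS])
      interpret RX: cring "?R X" by (rule alg_cring[OF IS XS])
      let ?T = "{s. x s \<noteq> (\<lambda>Y. 0)}"
      have axc: "a \<odot>\<^bsub>?B X\<^esub> x \<in> carrier (?B X)" using a x by simp
      have T: "finite ?T" "?T \<subseteq> Bsym S arr n X" using Bcar[OF IS XS x] by auto
      have sub: "{s. (a \<odot>\<^bsub>?B X\<^esub> x) s \<noteq> (\<lambda>Y. 0)} \<subseteq> ?T"
      proof
        fix s assume "s \<in> {s. (a \<odot>\<^bsub>?B X\<^esub> x) s \<noteq> (\<lambda>Y. 0)}"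
        then have "a \<otimes>\<^bsub>?R X\<^esub> x s \<noteq> \<zero>\<^bsub>?R X\<^esub>" by (simp add: Bmod_smult alg_zero[OF IS XS])
        then have "x s \<noteq> \<zero>\<^bsub>?R X\<^esub>" using a by auto
        then show "s \<in> ?T" by (simp add: alg_zero[OF IS XS])
      qed
      have c1: "tm X x \<in> ?T \<rightarrow> carrier (F X)" using tm_cl[OF XS _ x] T(2) by blast
      have "g X (a \<odot>\<^bsub>?B X\<^esub> x) = finsum (F X) (tm X (a \<odot>\<^bsub>?B X\<^esub> x)) ?T"
        by (rule g_sup[OF XS axc T(1) sub T(2)])
      also have "\<dots> = finsum (F X) (\<lambda>s. a \<odot>\<^bsub>F X\<^esub> tm X x s) ?T"
      proof (rule FX.finsum_cong')
        show "(\<lambda>s. a \<odot>\<^bsub>F X\<^esub> tm X x s) \<in> ?T \<rightarrow> carrier (F X)" using c1 a by auto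
        fix s assume "s \<in> ?T"
        then have sB: "s \<in> Bsym S arr n X" using T(2) by blast
        show "tm X (a \<odot>\<^bsub>?B X\<^esub> x) s = a \<odot>\<^bsub>F X\<^esub> tm X x s"
          unfolding tm_def Bmod_smult
          by (rule FX.smult_assoc1[OF a Bcar(3)[OF IS XS x] v_cl[OF XS sB]])
      qed simp
      also have "\<dots> = a \<odot>\<^bsub>F X\<^esub> finsum (F X) (tm X x) ?T"
        by (rule FX.finsum_smult_ldistr[symmetric, OF T(1) a c1])
      also have "\<dots> = a \<odot>\<^bsub>F X\<^esub> g X x" unfolding g_def ..
      finally show ?thesis .
    qed
    have g_nat: "g X (Bres X Y x) = resF X Y (g Y x)"
      if XS: "X \<in> S" and YS: "Y \<in> S" and XY: "arr X Y" and x: "x \<in> carrier (?B Y)" for X Y x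
    proof -
      interpret FX: module "?R X" "F X" by (rule Fmod[OF XS])
      interpret FY: module "?R Y" "F Y" by (rule Fmod[OF YS])
      let ?T = "{s. x s \<noteq> (\<lambda>Y. 0)}"
      have T: "finite ?T" "?T \<subseteq> Bsym S arr n Y" using Bcar[OF IS YS x] by auto
      have c1: "tm Y x \<in> ?T \<rightarrow> carrier (F Y)" using tm_cl[OF YS _ x] T(2) by blast
      have "resF X Y (g Y x) = finsum (F X) (\<lambda>s. resF X Y (tm Y x s)) ?T"
        unfolding g_def
        by (rule hom_finsum[OF FY.abelian_group_axioms FX.abelian_group_axioms Fres[OF XS YS XY] Fres_add[OF XS YS XY] T(1) c1])
      also have "\<dots> = finsum (F X) (tm X x) ?T"
      proof (rule FX.finsum_cong')
        show "tm X x \<in> ?T \<rightarrow> carrier (F X)"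
          using tm_cl[OF XS _ subsetD[OF Bcarrier_mono[OF IS XS YS XY] x]] T(2) Bsym_mono[OF IS XS YS XY] by blast
        fix s assume "s \<in> ?T"
        then have sB: "s \<in> Bsym S arr n Y" using T(2) by blast
        have MS: "M s \<in> S" "arr Y (M s)" using Msym[OF IS YS sB] unfolding M_def by auto
        have "resF X Y (tm Y x s) = x s \<odot>\<^bsub>F X\<^esub> resF X Y (resF Y (M s) (u s))"
          unfolding tm_def
          by (rule Fres_smult[OF XS YS XY Bcar(3)[OF IS YS x] v_cl[OF YS sB]])
        also have "\<dots> = tm X x s"
          unfolding tm_def using Fres_comp[OF XS YS MS(1) XY MS(2)] u_prop[OF YS sB] by simp
        finally show "resF X Y (tm Y x s) = tm X x s" .
      qed simp
      also have "\<dots> = g X x" unfolding g_def ..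
      finally show ?thesis unfolding Bres_def by simp
    qed
    have g_lift: "e X (g X x) = f X x" if XS: "X \<in> S" and x: "x \<in> carrier (?B X)" for X x
    proof -
      interpret FX: module "?R X" "F X" by (rule Fmod[OF XS])
      interpret GX: module "?R X" "G X" by (rule Gmod[OF XS])
      interpret BX: module "?R X" "?B X" by (rule Bmodx[OF XS])
      let ?T = "{s. x s \<noteq> (\<lambda>Y. 0)}"
      have T: "finite ?T" "?T \<subseteq> Bsym S arr n X" using Bcar[OF IS XS x] by auto
      have c1: "tm X x \<in> ?T \<rightarrow> carrier (F X)" using tm_cl[OF XS _ x] T(2) by blast
      have dc: "delta top1 s \<in> carrier (?B X)" if "s \<in> ?T" for s
        using delta_carrier[OF IS XS] T(2) that by blast
      have c2: "(\<lambda>s. x s \<odot>\<^bsub>?B X\<^esub> delta top1 s) \<in> ?T \<rightarrow> carrier (?B X)"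
        using dc Bcar(3)[OF IS XS x] by auto
      have "e X (g X x) = finsum (G X) (\<lambda>s. e X (tm X x s)) ?T"
        unfolding g_def
        by (rule hom_finsum[OF FX.abelian_group_axioms GX.abelian_group_axioms e_cl[OF XS] e_add[OF XS] T(1) c1])
      also have "\<dots> = finsum (G X) (\<lambda>s. f X (x s \<odot>\<^bsub>?B X\<^esub> delta top1 s)) ?T"
      proof (rule GX.finsum_cong')
        show "(\<lambda>s. f X (x s \<odot>\<^bsub>?B X\<^esub> delta top1 s)) \<in> ?T \<rightarrow> carrier (G X)"
          using c2 f_cl[OF XS] by auto
        fix s assume sT: "s \<in> ?T"
        then have sB: "s \<in> Bsym S arr n X" using T(2) by blast
        have MS: "M s \<in> S" "arr X (M s)" "s \<in> Bsym S arr n (M s)" using Msym[OF IS XS sB] unfolding M_def by auto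
        note up = u_prop[OF XS sB]
        have dM: "delta top1 s \<in> carrier (?B (M s))" by (rule delta_carrier[OF IS MS(1,3)])
        have "e X (tm X x s) = x s \<odot>\<^bsub>G X\<^esub> e X (resF X (M s) (u s))"
          unfolding tm_def by (rule e_smult[OF XS Bcar(3)[OF IS XS x] v_cl[OF XS sB]])
        also have "\<dots> = x s \<odot>\<^bsub>G X\<^esub> resG X (M s) (f (M s) (delta top1 s))"
          using e_nat[OF XS MS(1,2)] up by simp
        also have "\<dots> = x s \<odot>\<^bsub>G X\<^esub> f X (delta top1 s)"
          using f_nat[OF XS MS(1,2) dM] unfolding Bres_def by simp
        also have "\<dots> = f X (x s \<odot>\<^bsub>?B X\<^esub> delta top1 s)"
          by (rule f_smult[OF XS Bcar(3)[OF IS XS x] dc[OF sT], symmetric])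
        finally show "e X (tm X x s) = f X (x s \<odot>\<^bsub>?B X\<^esub> delta top1 s)" .
      qed simp
      also have "\<dots> = f X (finsum (?B X) (\<lambda>s. x s \<odot>\<^bsub>?B X\<^esub> delta top1 s) ?T)"
        by (rule hom_finsum[OF BX.abelian_group_axioms GX.abelian_group_axioms f_cl[OF XS] f_add[OF XS] T(1) c2, symmetric])
      also have "\<dots> = f X x" using B_expand[OF IS XS x] by simp
      finally show ?thesis .
    qed
    show "\<exists>g. presheaf_mod_hom S arr top1 ?B Bres F resF g \<and>
             (\<forall>X\<in>S. \<forall>x\<in>carrier (?B X). e X (g X x) = f X x)"
    proof (intro exI conjI)
      show "presheaf_mod_hom S arr top1 ?B Bres F resF g"
        unfolding presheaf_mod_hom_def
        using g_cl g_add g_smult g_nat by (intro conjI ballI impI Pi_I) auto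
      show "\<forall>X\<in>S. \<forall>x\<in>carrier (?B X). e X (g X x) = f X x" using g_lift by blast
    qed
  qed
qed

end
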